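(* For $1\le r\le m\le n$ and $\alpha\in\{1/2,1\}$, the function $\Lambda\mapsto\mathrm{MSE}_n(\Lambda;r,m,\alpha)$ on $[0,\infty)$ is convex and attains its minimum at a unique point.
   Context: Let $W_i(m,n)$ be the distribution of the $i$-th largest eigenvalue of $\frac1nZZ^T$, where $Z$ is a real $m\times n$ matrix with i.i.d. $\mathcal N(0,1)$ entries; $w_i(\Lambda;m,n)=\int_{\Lambda^2}^\infty(\sqrt t-\Lambda)^2\,dW_i(m,n)(t)$; and $\mathrm{MSE}_n(\Lambda;r,m,\alpha)=\frac rm+\frac rn-\frac{r^2}{mn}+\frac{r(n-r)}{mn}\Lambda^2+\alpha\frac{n-r}{mn}\sum_{i=1}^{m-r}w_i(\Lambda;m-r,n-r)$. *)

theory Defs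
  imports "HOL-Probability.Probability" "Jordan_Normal_Form.Char_Poly"
    "HOL-Library.Multiset"
begin

definition gauss_mat :: "nat \<Rightarrow> nat \<Rightarrow> (nat \<times> nat \<Rightarrow> real) measure" where
  "gauss_mat m n = PiM ({..<m} \<times> {..<n}) (\<lambda>_. density lborel std_normal_density)"

definition wishart_of :: "nat \<Rightarrow> nat \<Rightarrow> (nat \<times> nat \<Rightarrow> real) \<Rightarrow> real Matrix.mat" where
  "wishart_of m n Z = Matrix.mat m m (\<lambda>(i,j). (1 / real n) * (\<Sum>k<n. Z (i,k) * Z (j,k)))"

definition eigs_desc :: "real Matrix.mat \<Rightarrow> real list" where
  "eigs_desc A = rev (sorted_list_of_multiset (proots (char_poly A)))"

text \<open>i-th largest eigenvalue (i counted from 1).\<close>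
definition ith_eig :: "nat \<Rightarrow> real Matrix.mat \<Rightarrow> real" where
  "ith_eig i A = eigs_desc A ! (i - 1)"

definition W :: "nat \<Rightarrow> nat \<Rightarrow> nat \<Rightarrow> real measure" where
  "W i m n = distr (gauss_mat m n) borel (\<lambda>Z. ith_eig i (wishart_of m n Z))"

definition w :: "nat \<Rightarrow> real \<Rightarrow> nat \<Rightarrow> nat \<Rightarrow> real" where
  "w i \<Lambda> m n = (LINT t:{\<Lambda>\<^sup>2..}|W i m n. (sqrt t - \<Lambda>)\<^sup>2)"

definition MSE :: "nat \<Rightarrow> real \<Rightarrow> nat \<Rightarrow> nat \<Rightarrow> real \<Rightarrow> real" where
  "MSE n \<Lambda> r m \<alpha> =
     real r / real m + real r / real n - (real r)\<^sup>2 / (real m * real n)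
     + real r * real (n - r) / (real m * real n) * \<Lambda>\<^sup>2
     + \<alpha> * real (n - r) / (real m * real n) * (\<Sum>i=1..m - r. w i \<Lambda> (m - r) (n - r))"

end

theory Submission
  imports Defs
begin

lemma W_finite: "finite_measure (W i m n)"
proof -
  have P: "prob_space (gauss_mat m n)"
    unfolding gauss_mat_def by (auto intro!: prob_space_PiM prob_space_normal_density)
  let ?G = "gauss_mat m n" and ?f = "\<lambda>Z. ith_eig i (wishart_of m n Z)"
  have "emeasure (W i m n) (space (W i m n)) \<le> emeasure ?G (space ?G)"
    unfolding W_def distr_def emeasure_measure_of_conv
    by (auto intro: emeasure_space)
  also have "\<dots> = 1" using P by (simp add: prob_space.emeasure_space_1)
  finally show ?thesis by (intro finite_measureI) (auto simp: top_unique)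
qed

lemma W_sets: "sets (W i m n) = sets borel" unfolding W_def by simp

definition phi :: "real \<Rightarrow> real \<Rightarrow> real" where
  "phi t L = (max (sqrt t - L) 0)\<^sup>2"

lemma phi_eq:
  assumes "L \<ge> 0"
  shows "indicator {L\<^sup>2..} t *\<^sub>R (sqrt t - L)\<^sup>2 = phi t L"
proof (cases "t \<ge> L\<^sup>2")
  case True
  then have "sqrt t \<ge> L" using assms real_sqrt_le_mono by fastforce
  then show ?thesis using True by (simp add: phi_def)
next
  case False
  have "sqrt t < L"
  proof (cases "t < 0")
    case True then show ?thesis using assms by (smt (verit) real_sqrt_less_mono real_sqrt_zero)
  next
    case False2: False
    have "sqrt t < sqrt (L\<^sup>2)" using False by (metis not_le real_sqrt_less_mono)
    then show ?thesis using assms by simp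
  qed
  then show ?thesis using False by (simp add: phi_def)
qed

lemma phi_meas: "(\<lambda>t. phi t L) \<in> borel_measurable borel"
  unfolding phi_def by measurable

lemma phi_nonneg: "phi t L \<ge> 0" by (simp add: phi_def)

lemma phi_mono: "L \<ge> 0 \<Longrightarrow> phi t L \<le> phi t 0"
  unfolding phi_def by (intro power_mono) auto

lemma phi_convex:
  assumes "0 \<le> u" "u \<le> 1"
  shows "phi t ((1-u)*x + u*y) \<le> (1-u) * phi t x + u * phi t y"
proof -
  define s where "s = sqrt t"
  define a where "a = max (s - x) 0"
  define b where "b = max (s - y) 0"
  have ab: "a \<ge> 0" "b \<ge> 0" "a \<ge> s - x" "b \<ge> s - y" by (auto simp: a_def b_def)
  have "max (s - ((1-u)*x + u*y)) 0 \<le> (1-u)*a + u*b"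
  proof -
    have "s - ((1-u)*x + u*y) = (1-u)*(s-x) + u*(s-y)" by (simp add: algebra_simps)
    also have "\<dots> \<le> (1-u)*a + u*b" using ab assms
      by (intro add_mono mult_left_mono) auto
    finally show ?thesis using ab assms by auto
  qed
  then have "(max (s - ((1-u)*x + u*y)) 0)\<^sup>2 \<le> ((1-u)*a + u*b)\<^sup>2"
    by (intro power_mono) auto
  also have "\<dots> \<le> (1-u)*a\<^sup>2 + u*b\<^sup>2"
  proof -
    have "(1-u)*a\<^sup>2 + u*b\<^sup>2 - ((1-u)*a + u*b)\<^sup>2 = u*(1-u)*(a-b)\<^sup>2"
      by (simp add: power2_eq_square algebra_simps)
    moreover have "u*(1-u)*(a-b)\<^sup>2 \<ge> 0" using assms by simp
    ultimately show ?thesis by linarith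
  qed
  finally show ?thesis by (simp add: phi_def a_def b_def s_def)
qed

lemma phi_lip:
  assumes "a \<ge> 0" "b \<ge> 0"
  shows "\<bar>phi t a - phi t b\<bar> \<le> \<bar>a - b\<bar> * (1 + phi t 0)"
proof -
  define s where "s = sqrt t"
  define A where "A = max (s - a) 0"
  define B where "B = max (s - b) 0"
  define S where "S = max s 0"
  have 1: "\<bar>A - B\<bar> \<le> \<bar>a - b\<bar>" unfolding A_def B_def by (auto simp: abs_if max_def)
  have 2: "A + B \<le> 1 + S\<^sup>2"
  proof -
    have "A \<le> S" "B \<le> S" using assms by (auto simp: A_def B_def S_def max_def)
    moreover have "2*S \<le> 1 + S\<^sup>2" using sum_squares_ge_zero[of "S - 1" 0]
      by (simp add: power2_eq_square algebra_simps)
    ultimately show ?thesis by linarith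
  qed
  have 3: "A \<ge> 0" "B \<ge> 0" by (auto simp: A_def B_def)
  have "\<bar>A\<^sup>2 - B\<^sup>2\<bar> = \<bar>A - B\<bar> * (A + B)" using 3
    proof -
    have "A\<^sup>2 - B\<^sup>2 = (A - B) * (A + B)" by (simp add: power2_eq_square algebra_simps)
    then show ?thesis using 3 by (simp add: abs_mult)
  qed
  also have "\<dots> \<le> \<bar>a - b\<bar> * (1 + S\<^sup>2)" using 1 2 3
    by (intro mult_mono) auto
  finally show ?thesis by (simp add: phi_def A_def B_def S_def s_def)
qed

lemma phi_lower:
  assumes "L \<ge> 0"
  shows "phi t 0 \<le> 2 * phi t L + 2 * L\<^sup>2"
proof (cases "sqrt t \<ge> L")
  case True
  then have "sqrt t \<ge> 0" using assms by linarith
  then have "t \<ge> 0" by simp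
  with True have "phi t 0 = (sqrt t)\<^sup>2" "phi t L = (sqrt t - L)\<^sup>2" using assms by (auto simp: phi_def max_def)
  moreover have "(sqrt t)\<^sup>2 \<le> 2 * (sqrt t - L)\<^sup>2 + 2 * L\<^sup>2"
    using sum_squares_ge_zero[of "sqrt t - 2*L" 0] by (simp add: power2_eq_square algebra_simps)
  ultimately show ?thesis by simp
next
  case False
  then have "phi t 0 \<le> L\<^sup>2" unfolding phi_def using assms
    by (intro power_mono) auto
  moreover have "L\<^sup>2 \<ge> 0" by simp
  ultimately show ?thesis using phi_nonneg[of t L] by linarith
qed

definition FF :: "real measure \<Rightarrow> real \<Rightarrow> real" where
  "FF M L = integral\<^sup>L M (\<lambda>t. phi t L)"

lemma FF_props:
  assumes fin: "finite_measure M" and sets: "sets M = sets borel"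
  shows "convex_on {0..} (FF M) \<and> continuous_on {0..} (FF M)"
proof -
  interpret finite_measure M by fact
  have meas: "(\<lambda>t. phi t L) \<in> borel_measurable M" for L
    using phi_meas measurable_cong_sets[OF sets refl] by blast
  show ?thesis
  proof (cases "integrable M (\<lambda>t. phi t 0)")
    case True
    have int: "integrable M (\<lambda>t. phi t L)" if "L \<ge> 0" for L
      by (rule Bochner_Integration.integrable_bound[OF True meas])
         (use phi_mono[OF that] phi_nonneg in auto)
    have cvx: "convex_on {0..} (FF M)"
    proof (rule convex_onI)
      fix u x y :: real assume u: "u > 0" "u < 1" and xy: "x \<in> {0..}" "y \<in> {0..}"
      have "FF M ((1 - u) *\<^sub>R x + u *\<^sub>R y) = integral\<^sup>L M (\<lambda>t. phi t ((1-u)*x + u*y))"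
        by (simp add: FF_def)
      also have "\<dots> \<le> integral\<^sup>L M (\<lambda>t. (1-u) * phi t x + u * phi t y)"
        using int u xy phi_convex[of u] by (intro integral_mono) auto
      also have "\<dots> = (1-u) * FF M x + u * FF M y"
        using int xy by (simp add: FF_def)
      finally show "FF M ((1 - u) *\<^sub>R x + u *\<^sub>R y) \<le> (1 - u) * FF M x + u * FF M y" .
    qed (simp add: convex_real_interval)
    define K where "K = integral\<^sup>L M (\<lambda>t. 1 + phi t 0)"
    have K0: "K \<ge> 0" unfolding K_def by (intro integral_nonneg_AE) (auto intro!: add_nonneg_nonneg phi_nonneg)
    have "K-lipschitz_on {0..} (FF M)"
    proof (rule lipschitz_onI)
      fix x y :: real assume xy: "x \<in> {0..}" "y \<in> {0..}"
      have "dist (FF M x) (FF M y) = \<bar>integral\<^sup>L M (\<lambda>t. phi t x - phi t y)\<bar>"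
        using int xy by (simp add: FF_def dist_real_def)
      also have "\<dots> \<le> integral\<^sup>L M (\<lambda>t. \<bar>phi t x - phi t y\<bar>)"
        by (rule integral_abs_bound)
      also have "\<dots> \<le> integral\<^sup>L M (\<lambda>t. \<bar>x - y\<bar> * (1 + phi t 0))"
        using int xy True phi_lip by (intro integral_mono) auto
      also have "\<dots> = K * dist x y" using True by (simp add: K_def dist_real_def)
      finally show "dist (FF M x) (FF M y) \<le> K * dist x y" .
    qed (rule K0)
    then show ?thesis using cvx lipschitz_on_continuous_on by blast
  next
    case False
    have z: "FF M L = 0" if "L \<ge> 0" for L
    proof -
      have "\<not> integrable M (\<lambda>t. phi t L)"
      proof
        assume "integrable M (\<lambda>t. phi t L)"
        then have "integrable M (\<lambda>t. 2 * phi t L + 2 * L\<^sup>2)" by simp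
        then have "integrable M (\<lambda>t. phi t 0)"
          by (rule Bochner_Integration.integrable_bound[OF _ meas])
             (use phi_lower[OF that] phi_nonneg in auto)
        with False show False by simp
      qed
      then show ?thesis by (simp add: FF_def not_integrable_integral_eq)
    qed
    have "convex_on {0..} (FF M)"
      by (rule convex_onI) (auto simp: z)
    moreover have "continuous_on {0..} (FF M)"
      by (rule continuous_on_cong[THEN iffD2, OF refl, of _ _ "\<lambda>_. 0"]) (auto simp: z)
    ultimately show ?thesis by blast
  qed
qed

lemma FF_nonneg: "FF M L \<ge> 0"
  unfolding FF_def by (intro integral_nonneg_AE) (auto intro: phi_nonneg)

lemma w_FF: "L \<ge> 0 \<Longrightarrow> w i L m n = FF (W i m n) L"
  unfolding w_def FF_def set_lebesgue_integral_def using phi_eq by simp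

lemma w_props:
  shows "convex_on {0..} (\<lambda>L. w i L m n)" "continuous_on {0..} (\<lambda>L. w i L m n)"
    "L \<ge> 0 \<Longrightarrow> w i L m n \<ge> 0"
proof -
  have P: "convex_on {0..} (FF (W i m n)) \<and> continuous_on {0..} (FF (W i m n))"
    by (rule FF_props[OF W_finite W_sets])
  show "convex_on {0..} (\<lambda>L. w i L m n)"
  proof (rule convex_onI)
    fix u x y :: real assume "u > 0" "u < 1" "x \<in> {0..}" "y \<in> {0..}"
    moreover have "(1 - u) *\<^sub>R x + u *\<^sub>R y \<ge> 0" using calculation by simp
    ultimately show "w i ((1 - u) *\<^sub>R x + u *\<^sub>R y) m n \<le> (1 - u) * w i x m n + u * w i y m n"
      using convex_onD[OF P[THEN conjunct1], of u x y] by (simp add: w_FF)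
  qed simp
  show "continuous_on {0..} (\<lambda>L. w i L m n)"
    using P by (rule conjE) (erule continuous_on_cong[THEN iffD1, OF refl, rotated], simp add: w_FF)
  show "L \<ge> 0 \<Longrightarrow> w i L m n \<ge> 0" by (simp add: w_FF FF_nonneg)
qed

lemma sq_convex:
  fixes u x y :: real assumes "0 \<le> u" "u \<le> 1"
  shows "((1-u)*x + u*y)\<^sup>2 \<le> (1-u)*x\<^sup>2 + u*y\<^sup>2"
proof -
  have "(1-u)*x\<^sup>2 + u*y\<^sup>2 - ((1-u)*x + u*y)\<^sup>2 = u*(1-u)*(x-y)\<^sup>2"
    by (simp add: power2_eq_square algebra_simps)
  moreover have "u*(1-u)*(x-y)\<^sup>2 \<ge> 0" using assms by simp
  ultimately show ?thesis by linarith
qed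

theorem lemma6:
  fixes r m n :: nat and \<alpha> :: real
  assumes "1 \<le> r" and "r \<le> m" and "m \<le> n" and "r < n"
    and "\<alpha> \<in> {1/2, 1}"
  shows "convex_on {0..} (\<lambda>\<Lambda>. MSE n \<Lambda> r m \<alpha>)
    \<and> (\<exists>!\<Lambda>0. \<Lambda>0 \<in> {0..} \<and> (\<forall>\<Lambda>\<in>{0..}. MSE n \<Lambda>0 r m \<alpha> \<le> MSE n \<Lambda> r m \<alpha>))"
proof -
  define k where "k = m - r"
  define l where "l = n - r"
  define S where "S L = (\<Sum>i=1..k. w i L k l)" for L
  define a where "a = real r * real (n - r) / (real m * real n)"
  define b where "b = \<alpha> * real (n - r) / (real m * real n)"
  define c where "c = real r / real m + real r / real n - (real r)\<^sup>2 / (real m * real n)"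
  define f where "f L = MSE n L r m \<alpha>" for L
  have f_eq: "f L = c + a * L\<^sup>2 + b * S L" for L
    unfolding f_def MSE_def a_def b_def c_def S_def k_def l_def by simp
  have a0: "a > 0" unfolding a_def using assms by simp
  have al: "\<alpha> > 0" using assms(5) by auto
  have b0: "b \<ge> 0" unfolding b_def using assms al by simp
  have S0: "S L \<ge> 0" if "L \<ge> 0" for L
    unfolding S_def using w_props(3) that by (intro sum_nonneg) auto
  have Sc: "continuous_on {0..} S"
    unfolding S_def using w_props(2) by (intro continuous_on_sum) auto
  have Scv: "S ((1-u)*x + u*y) \<le> (1-u) * S x + u * S y"
    if "0 \<le> u" "u \<le> 1" "x \<ge> 0" "y \<ge> 0" for u x y
  proof -
    have "S ((1-u)*x + u*y) \<le> (\<Sum>i=1..k. (1-u) * w i x k l + u * w i y k l)"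
      unfolding S_def using convex_onD[OF w_props(1), of u x y] that
      by (intro sum_mono) auto
    also have "\<dots> = (1-u) * S x + u * S y"
      by (simp add: S_def sum.distrib sum_distrib_left)
    finally show ?thesis .
  qed
  have fcv: "f ((1-u)*x + u*y) \<le> (1-u) * f x + u * f y"
    if "0 \<le> u" "u \<le> 1" "x \<ge> 0" "y \<ge> 0" for u x y
  proof -
    have "a * ((1-u)*x + u*y)\<^sup>2 \<le> a * ((1-u)*x\<^sup>2 + u*y\<^sup>2)"
      using sq_convex[OF that(1,2)] a0 by (intro mult_left_mono) auto
    moreover have "b * S ((1-u)*x + u*y) \<le> b * ((1-u) * S x + u * S y)"
      using Scv[OF that] b0 by (intro mult_left_mono) auto
    ultimately show ?thesis unfolding f_eq by (simp add: algebra_simps)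
  qed
  have conv: "convex_on {0..} f"
  proof (rule convex_onI)
    fix u x y :: real assume "u > 0" "u < 1" "x \<in> {0..}" "y \<in> {0..}"
    then show "f ((1 - u) *\<^sub>R x + u *\<^sub>R y) \<le> (1 - u) * f x + u * f y"
      using fcv[of u x y] by simp
  qed simp
  have fc: "continuous_on {0..} f"
    unfolding f_eq[abs_def] by (intro continuous_intros Sc)
  have flow: "f L \<ge> c + a * L\<^sup>2" if "L \<ge> 0" for L
    using S0[OF that] b0 unfolding f_eq by (simp add: mult_nonneg_nonneg)
  define R where "R = sqrt (max 0 ((f 0 - c) / a))"
  have R0: "R \<ge> 0" unfolding R_def by simp
  have "R\<^sup>2 \<ge> (f 0 - c) / a" unfolding R_def by simp
  then have "a * R\<^sup>2 \<ge> f 0 - c" using a0 by (simp add: field_simps)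
  obtain x0 where x0: "x0 \<in> {0..R}" "\<And>y. y \<in> {0..R} \<Longrightarrow> f x0 \<le> f y"
    using continuous_attains_inf[of "{0..R}" f] R0 continuous_on_subset[OF fc] by force
  have min: "\<forall>y\<in>{0..}. f x0 \<le> f y"
  proof
    fix y :: real assume y: "y \<in> {0..}"
    show "f x0 \<le> f y"
    proof (cases "y \<le> R")
      case True then show ?thesis using x0 y by auto
    next
      case False
      have "R\<^sup>2 \<le> y\<^sup>2" using False R0 by (intro power_mono) auto
      then have "a * R\<^sup>2 \<le> a * y\<^sup>2" using a0 by simp
      then have "f 0 \<le> f y" using flow[of y] y \<open>a * R\<^sup>2 \<ge> f 0 - c\<close> by simp
      moreover have "f x0 \<le> f 0" using x0 R0 by auto
      ultimately show ?thesis by simp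
    qed
  qed
  have uniq: "x = y" if "x \<in> {0..}" "\<forall>z\<in>{0..}. f x \<le> f z" "y \<in> {0..}" "\<forall>z\<in>{0..}. f y \<le> f z" for x y
  proof (rule ccontr)
    assume ne: "x \<noteq> y"
    define z where "z = (1 - 1/2) * x + (1/2) * y"
    have xy: "x \<ge> 0" "y \<ge> 0" using that by auto
    have "z\<^sup>2 < (1 - 1/2) * x\<^sup>2 + (1/2) * y\<^sup>2"
    proof -
      have "(1 - 1/2) * x\<^sup>2 + (1/2) * y\<^sup>2 - z\<^sup>2 = (x - y)\<^sup>2 / 4"
        by (simp add: z_def power2_eq_square field_simps)
      moreover have "(x - y)\<^sup>2 > 0" using ne by simp
      ultimately show ?thesis by linarith
    qed
    then have "a * z\<^sup>2 < a * ((1 - 1/2) * x\<^sup>2 + (1/2) * y\<^sup>2)" using a0 by simp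
    moreover have "b * S z \<le> b * ((1 - 1/2) * S x + (1/2) * S y)"
      using Scv[of "1/2" x y] xy b0 unfolding z_def by (intro mult_left_mono) auto
    ultimately have "f z < (1 - 1/2) * f x + (1/2) * f y" unfolding f_eq by (simp add: algebra_simps)
    moreover have "z \<in> {0..}" using xy by (simp add: z_def)
    moreover have "f x \<le> f z" "f y \<le> f z" using that calculation(2) by auto
    ultimately show False by (simp add: field_simps)
  qed
  show ?thesis
    using conv min uniq x0(1) unfolding f_def by (intro conjI ex1I[of _ x0]) auto
qed

end
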